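(* Let $n$ and $b$ be integers with $1\le b<\frac{n}{2}-1$, and let $BT\in\mathcal{CT}^*_{n,b}$. Then \[ M_1(BT)\le\begin{cases}2(2n+3b-3) & \text{if } 1\le b<\frac{n-2}{3},\\ 2(4n-3b-7) & \text{if } \frac{n-2}{3}\le b<\frac{n}{2}-1.\end{cases} \] For $1\le b<\frac{n-2}{3}$, equality holds if and only if $BT$ has degree sequence consisting of $b$ entries $4$, $n-3b-2$ entries $2$ and $2b+2$ entries $1$. For $\frac{n-2}{3}\le b<\frac{n}{2}-1$, equality holds if and only if $BT$ has degree sequence consisting of $n-2b-2$ entries $4$, $3b-n+2$ entries $3$ and $n-b$ entries $1$.
   Context: A chemical tree is a tree with maximum degree at most $4$. A branching vertex is a vertex of degree greater than $2$. $\mathcal{CT}^*_{n,b}$ denotes the class of all $n$-vertex chemical trees with exactly $b$ branching vertices. The first Zagreb index is $M_1(G)=\sum_{v\in V(G)}d_v^2$, where $d_v$ is the degree of $v$. *)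

theory Defs
  imports Complex_Main "HOL-Library.Multiset"
begin

definition simple_graph :: "'a set \<Rightarrow> 'a set set \<Rightarrow> bool" where
  "simple_graph V E \<longleftrightarrow> finite V \<and> (\<forall>e\<in>E. e \<subseteq> V \<and> card e = 2)"

definition adj :: "'a set set \<Rightarrow> 'a \<Rightarrow> 'a \<Rightarrow> bool" where
  "adj E u v \<longleftrightarrow> {u, v} \<in> E"

definition connected_in :: "'a set set \<Rightarrow> 'a \<Rightarrow> 'a \<Rightarrow> bool" where
  "connected_in E u v \<longleftrightarrow> (adj E)\<^sup>*\<^sup>* u v"

definition connected_graph :: "'a set \<Rightarrow> 'a set set \<Rightarrow> bool" where
  "connected_graph V E \<longleftrightarrow> (\<forall>u\<in>V. \<forall>v\<in>V. connected_in E u v)"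

text \<open>Acyclic: every edge is a bridge (its endpoints are disconnected once it is removed).\<close>
definition acyclic_graph :: "'a set set \<Rightarrow> bool" where
  "acyclic_graph E \<longleftrightarrow> (\<forall>u v. {u, v} \<in> E \<longrightarrow> \<not> connected_in (E - {{u, v}}) u v)"

definition is_tree :: "'a set \<Rightarrow> 'a set set \<Rightarrow> bool" where
  "is_tree V E \<longleftrightarrow> simple_graph V E \<and> V \<noteq> {} \<and> connected_graph V E \<and> acyclic_graph E"

definition degree :: "'a set set \<Rightarrow> 'a \<Rightarrow> nat" where
  "degree E v = card {e \<in> E. v \<in> e}"

definition chemical_tree :: "'a set \<Rightarrow> 'a set set \<Rightarrow> bool" where
  "chemical_tree V E \<longleftrightarrow> is_tree V E \<and> (\<forall>v\<in>V. degree E v \<le> 4)"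

definition branching_vertices :: "'a set \<Rightarrow> 'a set set \<Rightarrow> 'a set" where
  "branching_vertices V E = {v \<in> V. degree E v > 2}"

definition CT_star :: "nat \<Rightarrow> nat \<Rightarrow> 'a set \<Rightarrow> 'a set set \<Rightarrow> bool" where
  "CT_star n b V E \<longleftrightarrow> chemical_tree V E \<and> card V = n \<and> card (branching_vertices V E) = b"

definition first_zagreb :: "'a set \<Rightarrow> 'a set set \<Rightarrow> nat" where
  "first_zagreb V E = (\<Sum>v\<in>V. (degree E v)^2)"

definition degree_sequence :: "'a set \<Rightarrow> 'a set set \<Rightarrow> nat multiset" where
  "degree_sequence V E = image_mset (degree E) (mset_set V)"

end

theory Submission
  imports Defs
begin

lemma adj_sym: "adj E u v \<Longrightarrow> adj E v u"
  by (simp add: adj_def insert_commute)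

lemma conn_sym: "connected_in E u v \<Longrightarrow> connected_in E v u"
  unfolding connected_in_def
  by (metis adj_sym sympD sympI symp_rtranclp)

lemma conn_trans: "connected_in E u v \<Longrightarrow> connected_in E v w \<Longrightarrow> connected_in E u w"
  unfolding connected_in_def by (meson rtranclp_trans)

lemma conn_mono: "E \<subseteq> F \<Longrightarrow> connected_in E u v \<Longrightarrow> connected_in F u v"
  unfolding connected_in_def
  by (metis (no_types, lifting) adj_def in_mono mono_rtranclp)

lemma conn_step: "connected_in E u w \<Longrightarrow> {w,x} \<in> E \<Longrightarrow> connected_in E u x"
  unfolding connected_in_def adj_def by (simp add: rtranclp.rtrancl_into_rtrancl)

lemma acyclic_mono: "acyclic_graph F \<Longrightarrow> G \<subseteq> F \<Longrightarrow> acyclic_graph G"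
  unfolding acyclic_graph_def
  by (meson Diff_mono conn_mono order_refl subset_iff)

lemma conn_split:
  assumes "connected_in E u w" "{u,v} \<in> E"
  shows "connected_in (E - {{u,v}}) u w \<or> connected_in (E - {{u,v}}) v w"
  using assms(1) unfolding connected_in_def
proof (induction rule: rtranclp_induct)
  case base
  then show ?case by simp
next
  case (step w x)
  show ?case
  proof (cases "{w,x} = {u,v}")
    case True
    then have "x = u \<or> x = v" by (metis doubleton_eq_iff)
    then show ?thesis by auto
  next
    case False
    then have "{w,x} \<in> E - {{u,v}}" using step(2) by (auto simp: adj_def)
    then show ?thesis using step(3) conn_step unfolding connected_in_def by metis
  qed
qed

lemma conn_restrict0:
  assumes "\<forall>e\<in>F. e \<subseteq> V" "(adj F)\<^sup>*\<^sup>* u w"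
  shows "(adj {e\<in>F. e \<subseteq> {y\<in>V. (adj F)\<^sup>*\<^sup>* u y}})\<^sup>*\<^sup>* u w"
  using assms(2)
proof (induction rule: rtranclp_induct)
  case base
  then show ?case by simp
next
  case (step w x)
  have e: "{w,x} \<in> F" using step(2) by (simp add: adj_def)
  then have "w \<in> V" "x \<in> V" using assms(1) by auto
  moreover have "(adj F)\<^sup>*\<^sup>* u x" using step(1) step(2) by (rule rtranclp.rtrancl_into_rtrancl)
  ultimately have "{w,x} \<in> {e\<in>F. e \<subseteq> {y\<in>V. (adj F)\<^sup>*\<^sup>* u y}}"
    using e step(1) by auto
  then have "adj {e\<in>F. e \<subseteq> {y\<in>V. (adj F)\<^sup>*\<^sup>* u y}} w x" by (simp only: adj_def)
  then show ?case by (rule rtranclp.rtrancl_into_rtrancl[OF step(3)])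
qed

lemma conn_restrict:
  assumes "\<forall>e\<in>F. e \<subseteq> V" "connected_in F u w"
  shows "connected_in {e\<in>F. e \<subseteq> {y\<in>V. connected_in F u y}} u w"
  using conn_restrict0[OF assms(1)] assms(2) unfolding connected_in_def by blast

lemma component_tree:
  assumes "simple_graph V F" "acyclic_graph F" "u \<in> V"
  shows "is_tree {w\<in>V. connected_in F u w} {e\<in>F. e \<subseteq> {w\<in>V. connected_in F u w}}"
proof -
  let ?A = "{w\<in>V. connected_in F u w}"
  let ?F = "{e\<in>F. e \<subseteq> ?A}"
  have sg: "simple_graph ?A ?F" using assms(1) by (auto simp: simple_graph_def)
  have ne: "?A \<noteq> {}" using assms(3) by (auto simp: connected_in_def)
  have "\<forall>e\<in>F. e \<subseteq> V" using assms(1) by (simp add: simple_graph_def)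
  then have c: "\<And>w. w \<in> ?A \<Longrightarrow> connected_in ?F u w" using conn_restrict[of F V u] by simp
  have cg: "connected_graph ?A ?F" unfolding connected_graph_def
    by (metis (no_types, lifting) c conn_sym conn_trans)
  have "acyclic_graph ?F" using acyclic_mono[OF assms(2)] by auto
  then show ?thesis using sg ne cg by (simp add: is_tree_def)
qed

lemma tree_card: "is_tree V E \<Longrightarrow> card V = card E + 1"
proof (induction "card E" arbitrary: V E rule: less_induct)
  case less
  have sg: "simple_graph V E" and ne: "V \<noteq> {}" and cg: "connected_graph V E"
    and ac: "acyclic_graph E" using less(2) by (auto simp: is_tree_def)
  have fV: "finite V" using sg by (simp add: simple_graph_def)
  have EV: "\<forall>e\<in>E. e \<subseteq> V \<and> card e = 2" using sg by (simp add: simple_graph_def)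
  have fE: "finite E" using EV fV by (meson Pow_iff finite_Pow_iff finite_subset subsetI)
  show ?case
  proof (cases "E = {}")
    case True
    obtain v where v: "v \<in> V" using ne by auto
    have "\<And>w. w \<in> V \<Longrightarrow> w = v"
    proof -
      fix w assume "w \<in> V"
      then have "(adj E)\<^sup>*\<^sup>* v w" using cg v by (simp add: connected_graph_def connected_in_def)
      moreover have "adj E = (\<lambda>_ _. False)" using True by (auto simp: fun_eq_iff adj_def)
      ultimately show "w = v" by (metis rtranclp.cases)
    qed
    then have "V = {v}" using v by blast
    then show ?thesis using True by simp
  next
    case False
    then obtain e where e: "e \<in> E" by auto
    then obtain u v where uv: "e = {u,v}" "u \<noteq> v" using EV by (meson card_2_iff)
    have uV: "u \<in> V" and vV: "v \<in> V" using EV e uv by auto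
    define F where "F = E - {{u,v}}"
    have sgF: "simple_graph V F" using sg by (auto simp: F_def simple_graph_def)
    have acF: "acyclic_graph F" using acyclic_mono[OF ac] by (auto simp: F_def)
    have nuv: "\<not> connected_in F u v" using ac e uv by (simp add: acyclic_graph_def F_def)
    define A where "A = {w\<in>V. connected_in F u w}"
    define B where "B = {w\<in>V. connected_in F v w}"
    define FA where "FA = {e\<in>F. e \<subseteq> A}"
    define FB where "FB = {e\<in>F. e \<subseteq> B}"
    have tA: "is_tree A FA" unfolding A_def FA_def using component_tree[OF sgF acF uV] .
    have tB: "is_tree B FB" unfolding B_def FB_def using component_tree[OF sgF acF vV] .
    have AB: "A \<inter> B = {}"
    proof (rule ccontr)
      assume "A \<inter> B \<noteq> {}"
      then obtain w where "connected_in F u w" "connected_in F v w" by (auto simp: A_def B_def)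
      then have "connected_in F u v" using conn_sym conn_trans by metis
      then show False using nuv by simp
    qed
    have AuB: "A \<union> B = V"
    proof
      show "A \<union> B \<subseteq> V" by (auto simp: A_def B_def)
      show "V \<subseteq> A \<union> B"
      proof
        fix w assume w: "w \<in> V"
        then have "connected_in E u w" using cg uV by (simp add: connected_graph_def)
        then show "w \<in> A \<union> B" using conn_split[of E u w v] e uv w
          by (auto simp: A_def B_def F_def)
      qed
    qed
    have FAB: "F = FA \<union> FB"
    proof
      show "FA \<union> FB \<subseteq> F" by (auto simp: FA_def FB_def)
      show "F \<subseteq> FA \<union> FB"
      proof
        fix f assume f: "f \<in> F"
        then have "card f = 2" using EV by (auto simp: F_def)
        then obtain x y where xy: "f = {x,y}" by (meson card_2_iff)
        have xyV: "x \<in> V" "y \<in> V" using f xy EV by (auto simp: F_def)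
        have "f \<subseteq> A \<or> f \<subseteq> B"
        proof (cases "x \<in> A")
          case True
          then have "connected_in F u x" by (simp add: A_def)
          then have "connected_in F u y" using f xy by (intro conn_step[of F u x y]) simp_all
          then show ?thesis using True xy xyV by (auto simp: A_def)
        next
          case False
          then have xB: "x \<in> B" using AuB xyV by auto
          then have "connected_in F v x" by (simp add: B_def)
          then have "connected_in F v y" using f xy by (intro conn_step[of F v x y]) simp_all
          then show ?thesis using xB xy xyV by (auto simp: B_def)
        qed
        then show "f \<in> FA \<union> FB" using f by (auto simp: FA_def FB_def)
      qed
    qed
    have fF: "finite F" using fE by (simp add: F_def)
    have dis: "FA \<inter> FB = {}"
    proof (rule ccontr)
      assume "FA \<inter> FB \<noteq> {}"
      then obtain f where f: "f \<in> F" "f \<subseteq> A" "f \<subseteq> B" by (auto simp: FA_def FB_def)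
      then have "card f = 2" using EV by (auto simp: F_def)
      then have "f \<noteq> {}" by auto
      then show False using f AB by auto
    qed
    have cF: "card F = card FA + card FB"
      using FAB dis fF by (metis card_Un_disjoint finite_Un)
    have "card E \<noteq> 0" using e fE by (metis card_0_eq empty_iff)
    moreover have "card F = card E - 1" using e uv fE by (simp add: F_def)
    ultimately have cE: "card E = card F + 1" by linarith
    have "card FA < card E" "card FB < card E" using cF cE by auto
    then have "card A = card FA + 1" "card B = card FB + 1" using less(1) tA tB by auto
    moreover have "card V = card A + card B" using AuB AB fV
      by (metis card_Un_disjoint finite_Un)
    ultimately show ?thesis using cF cE by simp
  qed
qed


lemma handshake:
  assumes "finite V" "finite E" "\<forall>e\<in>E. e \<subseteq> V \<and> card e = 2"
  shows "(\<Sum>v\<in>V. degree E v) = 2 * card E"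
proof -
  have d: "degree E v = (\<Sum>e\<in>E. if v \<in> e then 1 else 0)" for v
    unfolding degree_def using assms(2) by (simp add: sum.inter_filter[symmetric])
  have "(\<Sum>v\<in>V. degree E v) = (\<Sum>e\<in>E. \<Sum>v\<in>V. if v \<in> e then 1 else 0)"
    unfolding d by (rule sum.swap)
  also have "\<dots> = (\<Sum>e\<in>E. 2)"
  proof (rule sum.cong)
    fix e assume e: "e \<in> E"
    have "(\<Sum>v\<in>V. if v \<in> e then 1 else 0) = card {v\<in>V. v \<in> e}"
      using assms(1) by (simp add: sum.inter_filter[symmetric])
    also have "{v\<in>V. v \<in> e} = e" using assms(3) e by auto
    finally show "(\<Sum>v\<in>V. if v \<in> e then 1 else 0) = (2::nat)" using assms(3) e by simp
  qed simp
  finally show ?thesis by simp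
qed

lemma decomp:
  assumes "\<forall>x\<in>#D. x \<in> {1,2,3,4::nat}"
  shows "D = replicate_mset (count D 1) 1 + replicate_mset (count D 2) 2
            + replicate_mset (count D 3) 3 + replicate_mset (count D 4) 4"
proof (rule multiset_eqI)
  fix x
  show "count D x = count (replicate_mset (count D 1) 1 + replicate_mset (count D 2) 2
            + replicate_mset (count D 3) 3 + replicate_mset (count D 4) 4) x"
  proof (cases "x \<in> {1,2,3,4}")
    case True
    then show ?thesis by auto
  next
    case False
    then have "count D x = 0" using assms by (meson count_eq_zero_iff)
    then show ?thesis using False by auto
  qed
qed

lemma rep_eq_iff:
  "(replicate_mset a1 1 + replicate_mset a2 2 + replicate_mset a3 3 + replicate_mset a4 (4::nat)
    = replicate_mset b1 1 + replicate_mset b2 2 + replicate_mset b3 3 + replicate_mset b4 4)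
   \<longleftrightarrow> a1 = b1 \<and> a2 = b2 \<and> a3 = b3 \<and> a4 = b4"
proof
  assume h: "replicate_mset a1 1 + replicate_mset a2 2 + replicate_mset a3 3 + replicate_mset a4 (4::nat)
    = replicate_mset b1 1 + replicate_mset b2 2 + replicate_mset b3 3 + replicate_mset b4 4"
  have "count (replicate_mset a1 1 + replicate_mset a2 2 + replicate_mset a3 3 + replicate_mset a4 (4::nat)) i
     = count (replicate_mset b1 1 + replicate_mset b2 2 + replicate_mset b3 3 + replicate_mset b4 4) i" for i
    using h by simp
  from this[of 1] this[of 2] this[of 3] this[of 4] show "a1 = b1 \<and> a2 = b2 \<and> a3 = b3 \<and> a4 = b4"
    by simp
qed simp

lemma sumD:
  assumes "finite V"
  shows "(\<Sum>v\<in>V. f (g v)) = sum_mset (image_mset f (image_mset g (mset_set V)))"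
  by (simp add: sum_unfold_sum_mset multiset.map_comp comp_def)

lemma deg_pos:
  assumes "is_tree V E" "card V \<ge> 2" "v \<in> V"
  shows "degree E v \<ge> 1"
proof -
  have fV: "finite V" using assms(1) by (simp add: is_tree_def simple_graph_def)
  obtain w where w: "w \<in> V" "w \<noteq> v"
  proof (rule ccontr)
    assume "\<not> thesis"
    then have "V \<subseteq> {v}" using that by auto
    then have "card V \<le> card {v}" by (intro card_mono) simp_all
    then have "card V \<le> 1" by simp
    then show False using assms(2) by simp
  qed
  have "(adj E)\<^sup>*\<^sup>* v w" using assms(1,3) w
    by (simp add: is_tree_def connected_graph_def connected_in_def)
  then obtain y where "adj E v y" using w(2) by (metis converse_rtranclpE)
  then have y: "{v,y} \<in> E" by (simp add: adj_def)
  have EV: "\<forall>e\<in>E. e \<subseteq> V" using assms(1) by (simp add: is_tree_def simple_graph_def)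
  have fE: "finite E" using EV fV by (meson Pow_iff finite_Pow_iff finite_subset subsetI)
  have "{v,y} \<in> {e\<in>E. v \<in> e}" using y by simp
  moreover have "finite {e\<in>E. v \<in> e}" using fE by simp
  ultimately have "card {e\<in>E. v \<in> e} \<noteq> 0" by (metis card_0_eq empty_iff)
  then show ?thesis by (simp add: degree_def)
qed

theorem theorem3:
  fixes V :: "'a set" and E :: "'a set set" and n b :: nat
  assumes "1 \<le> b" and "real b < real n / 2 - 1"
    and "CT_star n b V E"
  shows "(real b < (real n - 2) / 3 \<longrightarrow>
            int (first_zagreb V E) \<le> 2 * (2 * int n + 3 * int b - 3) \<and>
            (int (first_zagreb V E) = 2 * (2 * int n + 3 * int b - 3) \<longleftrightarrow>
             degree_sequence V E = replicate_mset b 4 + replicate_mset (n - 3 * b - 2) 2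
                                    + replicate_mset (2 * b + 2) 1))
       \<and> ((real n - 2) / 3 \<le> real b \<longrightarrow>
            int (first_zagreb V E) \<le> 2 * (4 * int n - 3 * int b - 7) \<and>
            (int (first_zagreb V E) = 2 * (4 * int n - 3 * int b - 7) \<longleftrightarrow>
             degree_sequence V E = replicate_mset (n - 2 * b - 2) 4
                                    + replicate_mset (3 * b + 2 - n) 3
                                    + replicate_mset (n - b) 1))"
proof -
  have ct: "chemical_tree V E" and cV: "card V = n" and cB: "card (branching_vertices V E) = b"
    using assms(3) by (auto simp: CT_star_def)
  have tr: "is_tree V E" and d4: "\<forall>v\<in>V. degree E v \<le> 4" using ct by (auto simp: chemical_tree_def)
  have n2: "2 * b + 2 < n" using assms(2) by linarith
  have fV: "finite V" using tr by (simp add: is_tree_def simple_graph_def)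
  have EV: "\<forall>e\<in>E. e \<subseteq> V \<and> card e = 2" using tr by (simp add: is_tree_def simple_graph_def)
  have fE: "finite E" using EV fV by (meson Pow_iff finite_Pow_iff finite_subset subsetI)
  have cE: "card V = card E + 1" using tree_card[OF tr] .
  have hs: "(\<Sum>v\<in>V. degree E v) = 2 * card E" using handshake[OF fV fE EV] .
  have d1: "\<forall>v\<in>V. degree E v \<ge> 1" using deg_pos[OF tr] cV n2 by auto
  define D where "D = degree_sequence V E"
  have Dg: "D = image_mset (degree E) (mset_set V)" by (simp add: D_def degree_sequence_def)
  have r14: "\<And>x::nat. 1 \<le> x \<Longrightarrow> x \<le> 4 \<Longrightarrow> x \<in> {1,2,3,4}"
    by (simp only: insert_iff empty_iff) arith
  have Din: "\<forall>x\<in>#D. x \<in> {1,2,3,4::nat}" using d1 d4 fV r14 unfolding Dg by auto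
  define c1 where "c1 = count D 1"
  define c2 where "c2 = count D 2"
  define c3 where "c3 = count D 3"
  define c4 where "c4 = count D 4"
  have Dd: "D = replicate_mset c1 1 + replicate_mset c2 2 + replicate_mset c3 3 + replicate_mset c4 4"
    unfolding c1_def c2_def c3_def c4_def using decomp[OF Din] .
  have S: "(\<Sum>v\<in>V. f (degree E v)) = c1 * f 1 + c2 * f 2 + c3 * f 3 + c4 * f 4" for f :: "nat \<Rightarrow> nat"
  proof -
    have "(\<Sum>v\<in>V. f (degree E v)) = sum_mset (image_mset f D)" unfolding Dg using sumD[OF fV] .
    also have "\<dots> = c1 * f 1 + c2 * f 2 + c3 * f 3 + c4 * f 4" by (subst Dd) (simp add: ac_simps)
    finally show ?thesis .
  qed
  have eq1: "n = c1 + c2 + c3 + c4" using S[of "\<lambda>_. 1"] cV by simp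
  have eq2: "2 * n - 2 = c1 + 2 * c2 + 3 * c3 + 4 * c4" using S[of "\<lambda>x. x"] hs cE cV by simp
  have "b = (\<Sum>v\<in>V. if degree E v > 2 then 1 else 0)"
    using cB fV by (simp add: branching_vertices_def sum.inter_filter[symmetric])
  then have eq3: "b = c3 + c4" using S[of "\<lambda>x. if x > 2 then 1 else 0"] by simp
  have eqM: "first_zagreb V E = c1 + 4 * c2 + 9 * c3 + 16 * c4"
    using S[of "\<lambda>x. x^2"] by (simp add: first_zagreb_def)
  have r1: "degree_sequence V E = replicate_mset b 4 + replicate_mset (n - 3 * b - 2) 2
                                    + replicate_mset (2 * b + 2) 1
     \<longleftrightarrow> c1 = 2 * b + 2 \<and> c2 = n - 3 * b - 2 \<and> c3 = 0 \<and> c4 = b"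
  proof -
    have "replicate_mset b 4 + replicate_mset (n - 3 * b - 2) 2 + replicate_mset (2 * b + 2) 1
      = replicate_mset (2 * b + 2) 1 + replicate_mset (n - 3 * b - 2) 2 + replicate_mset 0 3 + replicate_mset b (4::nat)"
      by (simp add: ac_simps)
    then show ?thesis using rep_eq_iff Dd D_def by metis
  qed
  have r2: "degree_sequence V E = replicate_mset (n - 2 * b - 2) 4
                                    + replicate_mset (3 * b + 2 - n) 3
                                    + replicate_mset (n - b) 1
     \<longleftrightarrow> c1 = n - b \<and> c2 = 0 \<and> c3 = 3 * b + 2 - n \<and> c4 = n - 2 * b - 2"
  proof -
    have "replicate_mset (n - 2 * b - 2) 4 + replicate_mset (3 * b + 2 - n) 3 + replicate_mset (n - b) 1
      = replicate_mset (n - b) 1 + replicate_mset 0 2 + replicate_mset (3 * b + 2 - n) 3 + replicate_mset (n - 2 * b - 2) (4::nat)"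
      by (simp add: ac_simps)
    then show ?thesis using rep_eq_iff Dd D_def by metis
  qed
  have A: "real b < (real n - 2) / 3 \<longleftrightarrow> 3 * b + 2 < n" by (simp add: field_simps) linarith
  show ?thesis unfolding r1 r2 A eqM using eq1 eq2 eq3 n2 by auto
qed

end
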